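(* Let $f$ be a function of class $C^2$ on $\mathcal D=[0,1]^2$ with $f(0,0)=f(1,1)=0$. Then for $x\in\mathcal D$, $$\lim_{N\to\infty} N\big(B_N(f\circ A)(x)-f(x)\big)=L_d f(x),$$ where $$L_d f(x)=\frac{x_1(1-x_1)}{2}f_{x_1x_1}(x)+\frac{x_2(1-x_2)}{2d}f_{x_2x_2}(x)-\kappa\, Mx\cdot\nabla f(x).$$
   Context: Fix $d\in(0,1]$ and $\kappa>0$. For each $N$ with $N_2=dN$ an integer, set $N_1=N$, $M=\begin{pmatrix} d & -d\\ -1 & 1\end{pmatrix}$, $A=\mathrm{Id}-\frac{\kappa}{N}M$, and for a function $g$ on $\mathcal D$ $$B_N(g)(x)=\sum_{j_1=0}^{N_1}\sum_{j_2=0}^{N_2}\binom{N_1}{j_1}\binom{N_2}{j_2}x_1^{j_1}(1-x_1)^{N_1-j_1}x_2^{j_2}(1-x_2)^{N_2-j_2}\,g\!\left(\tfrac{j_1}{N_1},\tfrac{j_2}{N_2}\right).$$ Here $(f\circ A)(x)=f(Ax)$. *)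

theory Defs
  imports "HOL-Analysis.Analysis"
begin

definition unit_square :: "(real \<times> real) set" where
  "unit_square = {0..1} \<times> {0..1}"

definition Mmat :: "real \<Rightarrow> real \<times> real \<Rightarrow> real \<times> real" where
  "Mmat d x = (d * fst x - d * snd x, - fst x + snd x)"

definition Amat :: "real \<Rightarrow> real \<Rightarrow> nat \<Rightarrow> real \<times> real \<Rightarrow> real \<times> real" where
  "Amat d \<kappa> N x = x - (\<kappa> / real N) *\<^sub>R Mmat d x"

definition bernstein2 :: "nat \<Rightarrow> nat \<Rightarrow> (real \<times> real \<Rightarrow> real) \<Rightarrow> real \<times> real \<Rightarrow> real" where
  "bernstein2 N1 N2 g x =
     (\<Sum>j1\<le>N1. \<Sum>j2\<le>N2.
        real (N1 choose j1) * real (N2 choose j2)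
        * fst x ^ j1 * (1 - fst x) ^ (N1 - j1)
        * snd x ^ j2 * (1 - snd x) ^ (N2 - j2)
        * g (real j1 / real N1, real j2 / real N2))"

definition C2_on :: "(real \<times> real) set \<Rightarrow> (real \<times> real \<Rightarrow> real)
   \<Rightarrow> (real \<times> real \<Rightarrow> ((real \<times> real) \<Rightarrow>\<^sub>L real))
   \<Rightarrow> (real \<times> real \<Rightarrow> ((real \<times> real) \<Rightarrow>\<^sub>L ((real \<times> real) \<Rightarrow>\<^sub>L real))) \<Rightarrow> bool" where
  "C2_on S f f' f'' \<longleftrightarrow>
     (\<forall>x\<in>S. (f has_derivative blinfun_apply (f' x)) (at x within S)) \<and>
     (\<forall>x\<in>S. (f' has_derivative blinfun_apply (f'' x)) (at x within S)) \<and>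
     continuous_on S f''"

text \<open>The generator L_d f(x); the second partials are f_{x_i x_i}(x) = f''(x) e_i e_i,
  and Mx . grad f(x) = f'(x)(Mx).\<close>
definition L_gen :: "real \<Rightarrow> real
   \<Rightarrow> (real \<times> real \<Rightarrow> ((real \<times> real) \<Rightarrow>\<^sub>L real))
   \<Rightarrow> (real \<times> real \<Rightarrow> ((real \<times> real) \<Rightarrow>\<^sub>L ((real \<times> real) \<Rightarrow>\<^sub>L real)))
   \<Rightarrow> real \<times> real \<Rightarrow> real" where
  "L_gen d \<kappa> f' f'' x =
     fst x * (1 - fst x) / 2 * blinfun_apply (blinfun_apply (f'' x) (1, 0)) (1, 0)
     + snd x * (1 - snd x) / (2 * d) * blinfun_apply (blinfun_apply (f'' x) (0, 1)) (0, 1)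
     - \<kappa> * blinfun_apply (f' x) (Mmat d x)"

end

theory Submission
  imports Defs
begin

lemma sum_choose_Bernstein:
  "(\<Sum>k\<le>n. real (k choose r) * Bernstein n k t) = real (n choose r) * t^r"
proof (cases "r \<le> n")
  case False
  then show ?thesis by (auto intro!: sum.neutral simp: binomial_eq_0)
next
  case True
  have "(\<Sum>k\<le>n. real (k choose r) * Bernstein n k t) = (\<Sum>k\<in>{r..n}. real (k choose r) * Bernstein n k t)"
    by (rule sum.mono_neutral_right) auto
  also have "\<dots> = (\<Sum>k\<in>{r..n}. real (n choose r) * t^r * Bernstein (n-r) (k-r) t)"
  proof (rule sum.cong[OF refl])
    fix k assume k: "k \<in> {r..n}"
    have c: "real (n choose k) * real (k choose r) = real (n choose r) * real ((n - r) choose (k - r))"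
      using choose_mult[of r k n] k by (metis atLeastAtMost_iff of_nat_mult)
    have p1: "t^k = t^r * t^(k-r)" using k by (simp add: power_add[symmetric])
    have p2: "n - k = (n - r) - (k - r)" using k by auto
    show "real (k choose r) * Bernstein n k t = real (n choose r) * t^r * Bernstein (n-r) (k-r) t"
      unfolding Bernstein_def p1 p2[symmetric] using c
      by (simp add: algebra_simps)
  qed
  also have "\<dots> = real (n choose r) * t^r * (\<Sum>k\<in>{r..n}. Bernstein (n-r) (k-r) t)"
    by (simp add: sum_distrib_left)
  also have "(\<Sum>k\<in>{r..n}. Bernstein (n-r) (k-r) t) = (\<Sum>i\<in>{0..n-r}. Bernstein (n-r) i t)"
    using sum.atLeastAtMost_shift_0[OF True, of "\<lambda>k. Bernstein (n-r) (k-r) t"] by (simp add: comp_def)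
  also have "\<dots> = 1" using sum_Bernstein[of "n-r" t] by (simp add: atLeast0AtMost)
  finally show ?thesis by simp
qed

lemma choose2_real: "real (k choose 2) = real k * (real k - 1) / 2"
  by (induction k) (auto simp: numeral_2_eq_2 field_simps)

lemma choose3_real: "real (k choose 3) = real k * (real k - 1) * (real k - 2) / 6"
proof (induction k)
  case (Suc k)
  have "(Suc k) choose 3 = (k choose 2) + (k choose 3)"
    by (simp add: numeral_3_eq_3 numeral_2_eq_2)
  then show ?case using Suc choose2_real[of k] by (simp add: field_simps)
qed simp

lemma choose4_real: "real (k choose 4) = real k * (real k - 1) * (real k - 2) * (real k - 3) / 24"
proof (induction k)
  case (Suc k)
  have "(Suc k) choose 4 = (k choose 3) + (k choose 4)"
    by (simp add: numeral_3_eq_3 numeral_2_eq_2 eval_nat_numeral)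
  then show ?case using Suc choose3_real[of k] by (simp add: field_simps)
qed simp

lemma sumk1: "(\<Sum>k\<le>n. real k * Bernstein n k t) = real n * t"
  by simp

lemma sumk2: "(\<Sum>k\<le>n. real k ^ 2 * Bernstein n k t) = real n * (real n - 1) * t^2 + real n * t"
proof -
  have "(\<Sum>k\<le>n. real k ^ 2 * Bernstein n k t) = (\<Sum>k\<le>n. real k * (real k - 1) * Bernstein n k t + real k * Bernstein n k t)"
    by (rule sum.cong) (auto simp: algebra_simps power2_eq_square)
  then show ?thesis by (simp add: sum.distrib)
qed

lemma sumk3: "(\<Sum>k\<le>n. real k ^ 3 * Bernstein n k t) = real n * (real n - 1) * (real n - 2) * t^3 + 3 * (real n * (real n - 1) * t^2) + real n * t"
proof -
  have "(\<Sum>k\<le>n. real k ^ 3 * Bernstein n k t) = (\<Sum>k\<le>n. 6 * (real (k choose 3) * Bernstein n k t) + 3 * (real k * (real k - 1) * Bernstein n k t) + real k * Bernstein n k t)"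
    by (rule sum.cong) (simp_all add: choose3_real power3_eq_cube field_simps)
  also have "\<dots> = 6 * (real (n choose 3) * t^3) + 3 * (real n * (real n - 1) * t^2) + real n * t"
    by (simp add: sum.distrib sum_distrib_left[symmetric] sum_choose_Bernstein del: sum_kk_Bernstein) (simp add: sum_distrib_left)
  finally show ?thesis by (simp add: choose3_real)
qed

lemma sumk4: "(\<Sum>k\<le>n. real k ^ 4 * Bernstein n k t) = real n * (real n - 1) * (real n - 2) * (real n - 3) * t^4
   + 6 * (real n * (real n - 1) * (real n - 2) * t^3) + 7 * (real n * (real n - 1) * t^2) + real n * t"
proof -
  have "(\<Sum>k\<le>n. real k ^ 4 * Bernstein n k t) = (\<Sum>k\<le>n. 24 * (real (k choose 4) * Bernstein n k t) + 36 * (real (k choose 3) * Bernstein n k t) + 7 * (real k * (real k - 1) * Bernstein n k t) + real k * Bernstein n k t)"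
    by (rule sum.cong) (simp_all add: choose3_real choose4_real power4_eq_xxxx field_simps)
  also have "\<dots> = 24 * (real (n choose 4) * t^4) + 36 * (real (n choose 3) * t^3) + 7 * (real n * (real n - 1) * t^2) + real n * t"
    by (simp add: sum.distrib sum_distrib_left[symmetric] sum_choose_Bernstein del: sum_kk_Bernstein) (simp add: sum_distrib_left)
  finally show ?thesis by (simp add: choose3_real choose4_real)
qed

definition B1 :: "nat \<Rightarrow> real \<Rightarrow> (real \<Rightarrow> real) \<Rightarrow> real" where
  "B1 n t g = (\<Sum>k\<le>n. Bernstein n k t * g (real k / real n))"

lemma B1_mom2: assumes "n > 0" shows "B1 n t (\<lambda>s. (s - t)^2) = t * (1 - t) / real n"
proof -
  have "B1 n t (\<lambda>s. (s - t)^2) = (\<Sum>k\<le>n. (real k ^ 2 * Bernstein n k t - 2 * real n * t * (real k * Bernstein n k t) + (real n * t)^2 * Bernstein n k t) / (real n)^2)"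
    unfolding B1_def using assms by (intro sum.cong) (auto simp: field_simps power2_eq_square)
  also have "\<dots> = ((\<Sum>k\<le>n. real k ^ 2 * Bernstein n k t) - 2 * real n * t * (\<Sum>k\<le>n. real k * Bernstein n k t) + (real n * t)^2 * (\<Sum>k\<le>n. Bernstein n k t)) / (real n)^2"
    by (simp add: sum_divide_distrib[symmetric] sum.distrib sum_subtractf sum_distrib_left del: sum_k_Bernstein sum_Bernstein)
  also have "\<dots> = t * (1 - t) / real n"
    unfolding sumk2 sumk1 sum_Bernstein using assms by (simp add: field_simps power2_eq_square)
  finally show ?thesis .
qed

lemma B1_mom4_eq: assumes "n > 0" shows "B1 n t (\<lambda>s. (s - t)^4) =
   (3 * (real n)^2 * (t*(1-t))^2 + real n * (t * (1-t)) * (1 - 6 * (t * (1 - t)))) / (real n)^4"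
proof -
  have "B1 n t (\<lambda>s. (s - t)^4) = (\<Sum>k\<le>n. (real k ^ 4 * Bernstein n k t - 4 * real n * t * (real k ^ 3 * Bernstein n k t)
      + 6 * (real n * t)^2 * (real k ^ 2 * Bernstein n k t) - 4 * (real n * t)^3 * (real k * Bernstein n k t) + (real n * t)^4 * Bernstein n k t) / (real n)^4)"
    unfolding B1_def using assms by (intro sum.cong) (auto simp: field_simps power2_eq_square power3_eq_cube power4_eq_xxxx)
  also have "\<dots> = ((\<Sum>k\<le>n. real k ^ 4 * Bernstein n k t) - 4 * real n * t * (\<Sum>k\<le>n. real k ^ 3 * Bernstein n k t)
      + 6 * (real n * t)^2 * (\<Sum>k\<le>n. real k ^ 2 * Bernstein n k t) - 4 * (real n * t)^3 * (\<Sum>k\<le>n. real k * Bernstein n k t) + (real n * t)^4 * (\<Sum>k\<le>n. Bernstein n k t)) / (real n)^4"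
    by (simp add: sum_divide_distrib[symmetric] sum.distrib sum_subtractf sum_distrib_left del: sum_k_Bernstein sum_Bernstein)
  also have "\<dots> = (3 * (real n)^2 * (t*(1-t))^2 + real n * (t * (1-t)) * (1 - 6 * (t * (1 - t)))) / (real n)^4"
    unfolding sumk4 sumk3 sumk2 sumk1 sum_Bernstein by (simp add: algebra_simps power2_eq_square power3_eq_cube power4_eq_xxxx)
  finally show ?thesis .
qed

lemma B1_mom4: assumes "n > 0" "0 \<le> t" "t \<le> 1" shows "B1 n t (\<lambda>s. (s - t)^4) \<le> 1 / (real n)^2"
proof -
  define s where "s = t * (1 - t)"
  have s0: "0 \<le> s" using assms unfolding s_def by simp
  have "(t - 1/2)^2 \<ge> 0" by simp
  then have s1: "s \<le> 1/4" unfolding s_def by (simp add: power2_eq_square algebra_simps)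
  have n1: "real n \<ge> 1" using assms by simp
  have E: "3 * (real n)^2 * s^2 + real n * s * (1 - 6 * s) \<le> (real n)^2"
  proof -
    have "s^2 \<le> (1/4)^2" using s0 s1 by (intro power_mono) auto
    then have a: "3 * (real n)^2 * s^2 \<le> 3 * (real n)^2 * (1/16)" by (intro mult_left_mono) (auto simp: power2_eq_square)
    have "0 \<le> s * s" using s0 by simp
    moreover have "s * (1 - 6 * s) = s - 6 * (s * s)" by (simp add: algebra_simps)
    ultimately have "s * (1 - 6 * s) \<le> 1/4" using s0 s1 by linarith
    then have b0: "real n * (s * (1 - 6 * s)) \<le> real n * (1/4)" by (intro mult_left_mono) auto
    then have b: "real n * s * (1 - 6 * s) \<le> real n * (1/4)" by (simp only: mult.assoc)
    have c: "real n \<le> (real n)^2" using n1 by (simp add: power2_eq_square)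
    have "1 \<le> (real n)^2" using n1 by (simp add: one_le_power)
    then have d: "(real n)^2 * 1 \<le> (real n)^2 * (real n)^2" by (intro mult_left_mono) auto
    show ?thesis using a b c by linarith
  qed
  have "B1 n t (\<lambda>s. (s - t)^4) = (3 * (real n)^2 * s^2 + real n * s * (1 - 6 * s)) / (real n)^4"
    using B1_mom4_eq[OF assms(1), of t] unfolding s_def by simp
  also have "\<dots> \<le> (real n)^2 / (real n)^4" using E by (intro divide_right_mono) auto
  also have "\<dots> = 1 / (real n)^2" using assms by (simp add: field_simps power4_eq_xxxx power2_eq_square)
  finally show ?thesis .
qed

lemma taylor2:
  fixes f :: "'a::real_normed_vector \<Rightarrow> real"
    and f' :: "'a \<Rightarrow> ('a \<Rightarrow>\<^sub>L real)"
    and f'' :: "'a \<Rightarrow> ('a \<Rightarrow>\<^sub>L ('a \<Rightarrow>\<^sub>L real))"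
  assumes S: "convex S"
    and d1: "\<And>w. w \<in> S \<Longrightarrow> (f has_derivative blinfun_apply (f' w)) (at w within S)"
    and d2: "\<And>w. w \<in> S \<Longrightarrow> (f' has_derivative blinfun_apply (f'' w)) (at w within S)"
    and x: "x \<in> S" and u: "u \<in> S"
    and eta: "\<And>w. w \<in> S \<Longrightarrow> norm (w - x) \<le> norm (u - x) \<Longrightarrow> norm (f'' w - f'' x) \<le> \<eta>"
  shows "\<bar>f u - f x - f' x (u - x) - f'' x (u - x) (u - x) / 2\<bar> \<le> \<eta> * (norm (u - x))^2"
proof -
  define h where "h = u - x"
  define S' where "S' = S \<inter> cball x (norm h)"
  have seg: "x + t *\<^sub>R h \<in> S'" if t: "t \<in> {0..1}" for t
  proof -
    have "x + t *\<^sub>R h = (1 - t) *\<^sub>R x + t *\<^sub>R u" by (simp add: h_def algebra_simps)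
    also have "\<dots> \<in> S" using S x u t by (intro convexD) auto
    finally have "x + t *\<^sub>R h \<in> S" .
    moreover have "norm (t *\<^sub>R h) \<le> norm h" using t by (auto intro: mult_left_le_one_le)
    ultimately show ?thesis unfolding S'_def by (simp add: dist_norm)
  qed
  have S'S: "S' \<subseteq> S" unfolding S'_def by auto
  have eta0: "0 \<le> \<eta>" using eta[OF x] by simp
  have step1: "norm (f' (x + t *\<^sub>R h) - f' x - f'' x (t *\<^sub>R h)) \<le> t * norm h * \<eta>" if t: "t \<in> {0..1}" for t
  proof -
    have "norm (f' (x + t *\<^sub>R h) - f' x - blinfun_apply (f'' x) ((x + t *\<^sub>R h) - x)) \<le> norm ((x + t *\<^sub>R h) - x) * \<eta>"
    proof (rule differentiable_bound_linearization[where S=S' and f'="\<lambda>w. blinfun_apply (f'' w)"])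
      fix s :: real assume s: "s \<in> {0..1}"
      have "x + s *\<^sub>R (x + t *\<^sub>R h - x) = x + (s * t) *\<^sub>R h" by simp
      moreover have "s * t \<in> {0..1}" using s t by (auto intro: mult_le_one)
      ultimately show "x + s *\<^sub>R (x + t *\<^sub>R h - x) \<in> S'" using seg by metis
    next
      fix w assume "w \<in> S'"
      then show "(f' has_derivative blinfun_apply (f'' w)) (at w within S')"
        using d2 S'S by (meson has_derivative_subset subsetD)
    next
      fix w assume w: "w \<in> S'"
      have "onorm (blinfun_apply (f'' w) - blinfun_apply (f'' x)) = norm (f'' w - f'' x)"
      proof -
        have "blinfun_apply (f'' w) - blinfun_apply (f'' x) = blinfun_apply (f'' w - f'' x)"
          by (rule ext) (simp add: blinfun.diff_left)
        then show ?thesis by (simp add: norm_blinfun.rep_eq)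
      qed
      also have "\<dots> \<le> \<eta>" using w eta unfolding S'_def h_def by (auto simp: dist_norm norm_minus_commute)
      finally show "onorm (blinfun_apply (f'' w) - blinfun_apply (f'' x)) \<le> \<eta>" .
    next
      show "x \<in> S'" using seg[of 0] by simp
    qed
    then show ?thesis using t by simp
  qed
  define c where "c = (\<lambda>t. f' (x + t *\<^sub>R h) h - f' x h - t * f'' x h h)"
  define chi where "chi = (\<lambda>t. f (x + t *\<^sub>R h) - t * f' x h - t^2 / 2 * f'' x h h)"
  have dchi: "(chi has_derivative (\<lambda>s. s * c t)) (at t within {0..1})" if t: "t \<in> {0..1}" for t
  proof -
    have "((\<lambda>t. f (x + t *\<^sub>R h)) has_derivative (\<lambda>s. f' (x + t *\<^sub>R h) (s *\<^sub>R h))) (at t within {0..1})"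
    proof (rule has_derivative_in_compose2[where g=f and t=S and g'="\<lambda>w. blinfun_apply (f' w)"])
      show "\<And>w. w \<in> S \<Longrightarrow> (f has_derivative blinfun_apply (f' w)) (at w within S)" by (rule d1)
      show "(\<lambda>t. x + t *\<^sub>R h) ` {0..1} \<subseteq> S" using seg S'S by auto
      show "t \<in> {0..1}" by (rule t)
      show "((\<lambda>t. x + t *\<^sub>R h) has_derivative (\<lambda>s. s *\<^sub>R h)) (at t within {0..1})"
        by (auto intro!: derivative_eq_intros)
    qed
    then have "(chi has_derivative (\<lambda>s. f' (x + t *\<^sub>R h) (s *\<^sub>R h) - s * f' x h - (s * (2 * t) / 2) * f'' x h h)) (at t within {0..1})"
      unfolding chi_def by (auto intro!: derivative_eq_intros)
    moreover have "(\<lambda>s. f' (x + t *\<^sub>R h) (s *\<^sub>R h) - s * f' x h - (s * (2 * t) / 2) * f'' x h h) = (\<lambda>s. s * c t)"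
      unfolding c_def by (auto simp: blinfun.scaleR_right algebra_simps)
    ultimately show ?thesis by simp
  qed
  have bc: "onorm (\<lambda>s. s * c t) \<le> \<eta> * (norm h)^2" if t: "t \<in> {0..1}" for t
  proof (rule onorm_le)
    fix s :: real
    have "c t = blinfun_apply (f' (x + t *\<^sub>R h) - f' x - f'' x (t *\<^sub>R h)) h"
      unfolding c_def by (simp add: blinfun.bilinear_simps)
    then have "\<bar>c t\<bar> \<le> norm (f' (x + t *\<^sub>R h) - f' x - f'' x (t *\<^sub>R h)) * norm h"
      by (metis norm_blinfun real_norm_def)
    also have "\<dots> \<le> (t * norm h * \<eta>) * norm h" using step1[OF t] by (intro mult_right_mono) auto
    also have "\<dots> = \<eta> * (t * (norm h)^2)" by (simp add: power2_eq_square algebra_simps)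
    also have "\<dots> \<le> \<eta> * (norm h)^2" using t eta0
      by (intro mult_left_mono mult_left_le_one_le) auto
    finally have "\<bar>c t\<bar> \<le> \<eta> * (norm h)^2" .
    then show "norm (s * c t) \<le> \<eta> * (norm h)^2 * norm s"
      by (simp add: abs_mult mult.commute mult_left_mono)
  qed
  have "norm (chi 1 - chi 0) \<le> \<eta> * (norm h)^2 * norm (1 - 0 :: real)"
    by (rule differentiable_bound[OF convex_real_interval(5) dchi bc]) auto
  moreover have "chi 1 - chi 0 = f u - f x - f' x (u - x) - f'' x (u - x) (u - x) / 2"
    unfolding chi_def h_def by simp
  ultimately show ?thesis unfolding h_def by simp
qed

lemma B1_add: "B1 n t (\<lambda>s. g s + k s) = B1 n t g + B1 n t k"
  unfolding B1_def by (simp add: algebra_simps sum.distrib)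
lemma B1_cmult: "B1 n t (\<lambda>s. c * g s) = c * B1 n t g"
  unfolding B1_def by (simp add: algebra_simps sum_distrib_left)
lemma B1_const: "B1 n t (\<lambda>s. c) = c"
  unfolding B1_def by (simp add: sum_distrib_right[symmetric])
lemma B1_mom1: assumes "n > 0" shows "B1 n t (\<lambda>s. s - t) = 0"
proof -
  have "B1 n t (\<lambda>s. s - t) = (\<Sum>k\<le>n. real k * Bernstein n k t) / real n - t * (\<Sum>k\<le>n. Bernstein n k t)"
    unfolding B1_def by (simp add: algebra_simps sum_subtractf sum_divide_distrib sum_distrib_left del: sum_k_Bernstein sum_Bernstein)
  then show ?thesis using assms by simp
qed

definition B2 :: "nat \<Rightarrow> nat \<Rightarrow> real \<times> real \<Rightarrow> (real \<times> real \<Rightarrow> real) \<Rightarrow> real" where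
  "B2 n m x g = (\<Sum>j1\<le>n. \<Sum>j2\<le>m. Bernstein n j1 (fst x) * Bernstein m j2 (snd x) * g (real j1 / real n, real j2 / real m))"

lemma bernstein2_B2: "bernstein2 n m g x = B2 n m x g"
  unfolding bernstein2_def B2_def Bernstein_def by (intro sum.cong refl) (simp add: algebra_simps)

lemma B2_add: "B2 n m x (\<lambda>y. g y + k y) = B2 n m x g + B2 n m x k"
  unfolding B2_def by (simp add: algebra_simps sum.distrib)
lemma B2_diff: "B2 n m x (\<lambda>y. g y - k y) = B2 n m x g - B2 n m x k"
  unfolding B2_def by (simp add: algebra_simps sum_subtractf)
lemma B2_cmult: "B2 n m x (\<lambda>y. c * g y) = c * B2 n m x g"
  unfolding B2_def by (simp add: algebra_simps sum_distrib_left)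
lemma B2_prod: "B2 n m x (\<lambda>y. g1 (fst y) * g2 (snd y)) = B1 n (fst x) g1 * B1 m (snd x) g2"
  unfolding B2_def B1_def by (simp add: sum_product algebra_simps) (rule sum.swap)
lemma B2_fst: "B2 n m x (\<lambda>y. g1 (fst y)) = B1 n (fst x) g1"
  using B2_prod[of n m x g1 "\<lambda>_. 1"] by (simp add: B1_const)
lemma B2_snd: "B2 n m x (\<lambda>y. g2 (snd y)) = B1 m (snd x) g2"
  using B2_prod[of n m x "\<lambda>_. 1" g2] by (simp add: B1_const)
lemma B2_const: "B2 n m x (\<lambda>y. c) = c"
  using B2_fst[of n m x "\<lambda>_. c"] by (simp add: B1_const)

lemma grid_in: "j \<le> n \<Longrightarrow> real j / real n \<in> {0..1}"
  by (cases "n = 0") (auto simp: field_simps)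

lemma B2_mono:
  assumes x: "x \<in> unit_square" and le: "\<And>y. y \<in> unit_square \<Longrightarrow> g y \<le> k y"
  shows "B2 n m x g \<le> B2 n m x k"
  unfolding B2_def
proof (intro sum_mono mult_left_mono)
  fix j1 j2 assume j: "j1 \<in> {..n}" "j2 \<in> {..m}"
  show "g (real j1 / real n, real j2 / real m) \<le> k (real j1 / real n, real j2 / real m)"
    using j grid_in[of j1 n] grid_in[of j2 m] by (intro le) (auto simp: unit_square_def)
  show "0 \<le> Bernstein n j1 (fst x) * Bernstein m j2 (snd x)"
    using x by (intro mult_nonneg_nonneg Bernstein_nonneg) (auto simp: unit_square_def)
qed

lemma B2_quad:
  assumes "n > 0" "m > 0"
  shows "B2 n m x (\<lambda>y. c0 + c1 * (fst y - fst x) + c2 * (snd y - snd x) + c3 * (fst y - fst x)^2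
      + c4 * ((fst y - fst x) * (snd y - snd x)) + c5 * (snd y - snd x)^2)
    = c0 + c3 * (fst x * (1 - fst x) / real n) + c5 * (snd x * (1 - snd x) / real m)"
proof -
  have 1: "B2 n m x (\<lambda>y. fst y - fst x) = 0" using B2_fst[of n m x "\<lambda>s. s - fst x"] B1_mom1 assms by simp
  have 2: "B2 n m x (\<lambda>y. snd y - snd x) = 0" using B2_snd[of n m x "\<lambda>s. s - snd x"] B1_mom1 assms by simp
  have 3: "B2 n m x (\<lambda>y. (fst y - fst x)^2) = fst x * (1 - fst x) / real n"
    using B2_fst[of n m x "\<lambda>s. (s - fst x)^2"] B1_mom2 assms by simp
  have 4: "B2 n m x (\<lambda>y. (snd y - snd x)^2) = snd x * (1 - snd x) / real m"
    using B2_snd[of n m x "\<lambda>s. (s - snd x)^2"] B1_mom2 assms by simp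
  have 5: "B2 n m x (\<lambda>y. (fst y - fst x) * (snd y - snd x)) = 0"
    using B2_prod[of n m x "\<lambda>s. s - fst x" "\<lambda>s. s - snd x"] B1_mom1 assms by simp
  show ?thesis by (simp add: B2_add B2_cmult B2_const 1 2 3 4 5)
qed

lemma lin1: "blinfun_apply (F :: (real \<times> real) \<Rightarrow>\<^sub>L real) (v1, v2) = v1 * F (1, 0) + v2 * F (0, 1)"
proof -
  have "blinfun_apply F (v1, v2) = blinfun_apply F (v1 *\<^sub>R (1, 0) + v2 *\<^sub>R (0, 1))" by simp
  also have "\<dots> = v1 *\<^sub>R F (1, 0) + v2 *\<^sub>R F (0, 1)" by (simp only: blinfun.add_right blinfun.scaleR_right)
  finally show ?thesis by simp
qed

lemma lin2: "blinfun_apply (blinfun_apply (G :: (real \<times> real) \<Rightarrow>\<^sub>L ((real \<times> real) \<Rightarrow>\<^sub>L real)) (v1, v2)) (w1, w2)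
   = v1 * w1 * G (1,0) (1,0) + v1 * w2 * G (1,0) (0,1) + v2 * w1 * G (0,1) (1,0) + v2 * w2 * G (0,1) (0,1)"
proof -
  have "blinfun_apply G (v1, v2) = blinfun_apply G (v1 *\<^sub>R (1, 0) + v2 *\<^sub>R (0, 1))" by simp
  also have "\<dots> = v1 *\<^sub>R G (1, 0) + v2 *\<^sub>R G (0, 1)" by (simp only: blinfun.add_right blinfun.scaleR_right)
  finally have "blinfun_apply G (v1, v2) = v1 *\<^sub>R G (1,0) + v2 *\<^sub>R G (0,1)" .
  then have "blinfun_apply (blinfun_apply G (v1, v2)) (w1, w2) = blinfun_apply (v1 *\<^sub>R G (1,0) + v2 *\<^sub>R G (0,1)) (w1, w2)"
    by (rule arg_cong[where f="\<lambda>F. blinfun_apply F (w1,w2)"])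
  also have "\<dots> = v1 * G (1,0) (w1, w2) + v2 * G (0,1) (w1, w2)"
    by (simp only: blinfun.add_left blinfun.scaleR_left real_scaleR_def)
  also have "\<dots> = v1 * (w1 * G (1,0) (1,0) + w2 * G (1,0) (0,1)) + v2 * (w1 * G (0,1) (1,0) + w2 * G (0,1) (0,1))"
    by (simp only: lin1[of "G (1,0)" w1 w2] lin1[of "G (0,1)" w1 w2])
  finally show ?thesis by (simp add: algebra_simps)
qed

lemma Aeq: "Amat d \<kappa> N y - x =
  (- (\<kappa> / real N * d) * (fst x - snd x) + (1 - \<kappa> / real N * d) * (fst y - fst x) + (\<kappa> / real N * d) * (snd y - snd x),
   (\<kappa> / real N) * (fst x - snd x) + (\<kappa> / real N) * (fst y - fst x) + (1 - \<kappa> / real N) * (snd y - snd x))"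
proof -
  have "\<And>t. y - t *\<^sub>R Mmat d y - x = (- (t * d) * (fst x - snd x) + (1 - t * d) * (fst y - fst x) + (t * d) * (snd y - snd x),
   t * (fst x - snd x) + t * (fst y - fst x) + (1 - t) * (snd y - snd x))"
    by (simp add: Mmat_def prod_eq_iff algebra_simps)
  then show ?thesis unfolding Amat_def by blast
qed

lemma A_in:
  assumes y: "y \<in> unit_square" and t: "0 \<le> \<kappa> / real N" "\<kappa> / real N \<le> 1" and d: "0 < d" "d \<le> 1"
  shows "Amat d \<kappa> N y \<in> unit_square"
proof -
  define t where "t = \<kappa> / real N"
  obtain y1 y2 where yy: "y = (y1, y2)" by fastforce
  have y1: "0 \<le> y1" "y1 \<le> 1" and y2: "0 \<le> y2" "y2 \<le> 1" using y by (auto simp: unit_square_def yy)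
  have t': "0 \<le> t" "t \<le> 1" using t by (simp_all add: t_def)
  have td: "0 \<le> t * d" "t * d \<le> 1" using t' d by (auto intro: mult_le_one)
  have "\<And>t. y - t *\<^sub>R Mmat d y = ((1 - t * d) * y1 + (t * d) * y2, t * y1 + (1 - t) * y2)"
    by (simp add: Mmat_def yy algebra_simps)
  then have "Amat d \<kappa> N y = ((1 - t * d) * y1 + (t * d) * y2, t * y1 + (1 - t) * y2)"
    unfolding Amat_def t_def by blast
  moreover have "0 \<le> (1 - t * d) * y1 + (t * d) * y2" using td y1 y2 by simp
  moreover have "(1 - t * d) * y1 + (t * d) * y2 \<le> 1"
  proof -
    have "(1 - t * d) * y1 \<le> (1 - t * d)" using td y1 by (simp add: mult_left_le)
    moreover have "(t * d) * y2 \<le> t * d" using td y2 by (simp add: mult_left_le)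
    ultimately show ?thesis by linarith
  qed
  moreover have "0 \<le> t * y1 + (1 - t) * y2" using t' y1 y2 by simp
  moreover have "t * y1 + (1 - t) * y2 \<le> 1"
  proof -
    have "t * y1 \<le> t" using t' y1 by (simp add: mult_left_le)
    moreover have "(1 - t) * y2 \<le> 1 - t" using t' y2 by (simp add: mult_left_le)
    ultimately show ?thesis by linarith
  qed
  ultimately show ?thesis by (simp add: unit_square_def)
qed

lemma B2_bilin:
  assumes "n > 0" "m > 0"
  shows "B2 n m x (\<lambda>y. (p0 + p1 * (fst y - fst x) + p2 * (snd y - snd x)) * (q0 + q1 * (fst y - fst x) + q2 * (snd y - snd x)))
    = p0 * q0 + p1 * q1 * (fst x * (1 - fst x) / real n) + p2 * q2 * (snd x * (1 - snd x) / real m)"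
proof -
  have "(\<lambda>y. (p0 + p1 * (fst y - fst x) + p2 * (snd y - snd x)) * (q0 + q1 * (fst y - fst x) + q2 * (snd y - snd x)))
    = (\<lambda>y. p0 * q0 + (p0 * q1 + p1 * q0) * (fst y - fst x) + (p0 * q2 + p2 * q0) * (snd y - snd x) + (p1 * q1) * (fst y - fst x)^2
      + (p1 * q2 + p2 * q1) * ((fst y - fst x) * (snd y - snd x)) + (p2 * q2) * (snd y - snd x)^2)"
    by (rule ext) (simp add: algebra_simps power2_eq_square)
  then show ?thesis using B2_quad[OF assms] by simp
qed

lemma B2_lin:
  assumes "n > 0" "m > 0"
  shows "B2 n m x (\<lambda>y. p0 + p1 * (fst y - fst x) + p2 * (snd y - snd x)) = p0"
  using B2_quad[OF assms, of x p0 p1 p2 0 0 0] by simp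

lemma sq1: "(a - b)^2 \<le> 2*a^2 + 2*(b::real)^2"
proof -
  have "2*a^2+2*b^2 - (a-b)^2 = (a+b)^2" by (simp add: power2_eq_square algebra_simps)
  moreover have "0 \<le> (a+b)^2" by simp
  ultimately show ?thesis by linarith
qed

lemma sq3: "(A + B + C)^2 \<le> 3*(A^2 + B^2 + (C::real)^2)"
proof -
  have "3*(A^2 + B^2 + C^2) - (A + B + C)^2 = (A-B)^2 + (B-C)^2 + (A-C)^2" by (simp add: power2_eq_square algebra_simps)
  moreover have "0 \<le> (A-B)^2 + (B-C)^2 + (A-C)^2" by simp
  ultimately show ?thesis by linarith
qed

lemma rem_bound:
  fixes f :: "real \<times> real \<Rightarrow> real"
    and f' :: "real \<times> real \<Rightarrow> ((real \<times> real) \<Rightarrow>\<^sub>L real)"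
    and f'' :: "real \<times> real \<Rightarrow> ((real \<times> real) \<Rightarrow>\<^sub>L ((real \<times> real) \<Rightarrow>\<^sub>L real))"
  assumes d1: "\<And>w. w \<in> unit_square \<Longrightarrow> (f has_derivative blinfun_apply (f' w)) (at w within unit_square)"
    and d2: "\<And>w. w \<in> unit_square \<Longrightarrow> (f' has_derivative blinfun_apply (f'' w)) (at w within unit_square)"
    and x: "x \<in> unit_square" and y: "y \<in> unit_square"
    and d: "0 < d" "d \<le> 1" and t: "0 \<le> \<kappa> / real N" "\<kappa> / real N \<le> 1"
    and eps: "0 \<le> eps" and \<delta>: "0 < \<delta>" and K: "0 \<le> K"
    and h\<delta>: "\<And>w. w \<in> unit_square \<Longrightarrow> norm (w - x) < \<delta> \<Longrightarrow> norm (f'' w - f'' x) \<le> eps"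
    and hK: "\<And>w. w \<in> unit_square \<Longrightarrow> norm (f'' w - f'' x) \<le> K"
  shows "\<bar>f (Amat d \<kappa> N y) - f x - f' x (Amat d \<kappa> N y - x) - f'' x (Amat d \<kappa> N y - x) (Amat d \<kappa> N y - x) / 2\<bar>
    \<le> eps * (2 * (fst y - fst x)^2 + 2 * (snd y - snd x)^2 + 4 * (\<kappa> / real N)^2)
      + K / \<delta>^2 * (12 * (fst y - fst x)^4 + 12 * (snd y - snd x)^4 + 48 * (\<kappa> / real N)^4)"
proof -
  define S where "S = unit_square"
  have convS: "convex S" unfolding S_def unit_square_def by (auto intro!: convex_Times)
  define u where "u = Amat d \<kappa> N y"
  have uS: "u \<in> S" unfolding u_def S_def using A_in[OF y t d] .
  define r where "r = norm (u - x)"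
  define Rx where "Rx = f u - f x - f' x (u - x) - f'' x (u - x) (u - x) / 2"
  have T: "\<bar>Rx\<bar> \<le> eps * r^2 + K / \<delta>^2 * (r^2)^2"
  proof (cases "r < \<delta>")
    case True
    have "\<bar>Rx\<bar> \<le> eps * r^2" unfolding Rx_def r_def
      by (rule taylor2[OF convS d1[folded S_def] d2[folded S_def]]) (use x uS True h\<delta> in \<open>auto simp: S_def r_def\<close>)
    moreover have "0 \<le> K / \<delta>^2 * (r^2)^2" using K by simp
    ultimately show ?thesis by linarith
  next
    case False
    have "\<bar>Rx\<bar> \<le> K * r^2" unfolding Rx_def r_def
      by (rule taylor2[OF convS d1[folded S_def] d2[folded S_def]]) (use x uS hK in \<open>auto simp: S_def\<close>)
    also have "K * r^2 = K / \<delta>^2 * (r^2 * \<delta>^2)" using \<delta> by simp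
    also have "\<dots> \<le> K / \<delta>^2 * (r^2 * r^2)"
      using False \<delta> K by (intro mult_left_mono mult_left_mono power_mono) auto
    also have "\<dots> \<le> eps * r^2 + K / \<delta>^2 * (r^2)^2" using eps by (simp add: power2_eq_square)
    finally show ?thesis .
  qed
  define tt where "tt = \<kappa> / real N"
  define h1 where "h1 = fst y - fst x"
  define h2 where "h2 = snd y - snd x"
  have y01: "0 \<le> fst y" "fst y \<le> 1" "0 \<le> snd y" "snd y \<le> 1" using y by (auto simp: unit_square_def)
  have e1: "fst (u - x) = h1 - tt * (d * (fst y - snd y))"
    by (simp add: u_def Amat_def Mmat_def h1_def tt_def algebra_simps)
  have e2: "snd (u - x) = h2 - tt * (snd y - fst y)"
    by (simp add: u_def Amat_def Mmat_def h2_def tt_def algebra_simps)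
  have b1: "\<bar>d * (fst y - snd y)\<bar> \<le> 1"
  proof -
    have "\<bar>d * (fst y - snd y)\<bar> = d * \<bar>fst y - snd y\<bar>" using d by (simp add: abs_mult)
    also have "\<dots> \<le> 1 * 1" using d y01 by (intro mult_mono) auto
    finally show ?thesis by simp
  qed
  have b2: "\<bar>snd y - fst y\<bar> \<le> 1" using y01 by auto
  have tt: "0 \<le> tt" "tt \<le> 1" using t by (simp_all add: tt_def)
  have "(tt * (d * (fst y - snd y)))^2 \<le> tt^2"
  proof -
    have "\<bar>tt * (d * (fst y - snd y))\<bar> \<le> \<bar>tt\<bar>" using b1 tt by (simp add: abs_mult mult_left_le)
    then show ?thesis by (metis abs_le_square_iff)
  qed
  then have E1: "(fst (u - x))^2 \<le> 2 * h1^2 + 2 * tt^2" unfolding e1 using sq1[of h1 "tt * (d * (fst y - snd y))"] by linarith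
  have "(tt * (snd y - fst y))^2 \<le> tt^2"
  proof -
    have "\<bar>tt * (snd y - fst y)\<bar> \<le> \<bar>tt\<bar>" using b2 tt by (simp add: abs_mult mult_left_le)
    then show ?thesis by (metis abs_le_square_iff)
  qed
  then have E2: "(snd (u - x))^2 \<le> 2 * h2^2 + 2 * tt^2" unfolding e2 using sq1[of h2 "tt * (snd y - fst y)"] by linarith
  have r2: "r^2 = (fst (u - x))^2 + (snd (u - x))^2"
  proof -
    have "r = sqrt ((fst (u - x))^2 + (snd (u - x))^2)" unfolding r_def
      by (metis norm_Pair prod.collapse real_norm_def power2_abs)
    then show ?thesis by simp
  qed
  define Z where "Z = 2 * h1^2 + 2 * h2^2 + 4 * tt^2"
  have rZ: "r^2 \<le> Z" using r2 E1 E2 unfolding Z_def by linarith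
  have "(r^2)^2 \<le> Z^2" using rZ by (intro power_mono) auto
  also have "Z^2 \<le> 3 * ((2 * h1^2)^2 + (2 * h2^2)^2 + (4 * tt^2)^2)" unfolding Z_def by (rule sq3)
  also have "\<dots> = 12 * h1^4 + 12 * h2^4 + 48 * tt^4" by (simp add: power2_eq_square power4_eq_xxxx)
  finally have r4: "(r^2)^2 \<le> 12 * h1^4 + 12 * h2^4 + 48 * tt^4" .
  have "eps * r^2 + K / \<delta>^2 * (r^2)^2 \<le> eps * Z + K / \<delta>^2 * (12 * h1^4 + 12 * h2^4 + 48 * tt^4)"
    using rZ r4 eps K by (intro add_mono mult_left_mono) auto
  with T show ?thesis unfolding Rx_def u_def Z_def h1_def h2_def tt_def by linarith
qed

definition PhiF :: "real \<Rightarrow> real \<Rightarrow> real \<Rightarrow> real \<Rightarrow> real \<Rightarrow> real \<Rightarrow> real \<Rightarrow> real \<Rightarrow> real \<Rightarrow> real \<Rightarrow> real \<Rightarrow> real \<Rightarrow> real" where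
  "PhiF \<kappa> d D w1 w2 a1 a2 c11 c12 c21 c22 s =
     a1 * (- (\<kappa> * d * D)) + a2 * (\<kappa> * D)
     + 1/2 * (c11 * ((\<kappa> * d * D)^2 * s + (1 - \<kappa> * d * s)^2 * w1 + (\<kappa> * d * s)^2 * w2)
       + (c12 + c21) * (- (\<kappa> * d * D) * (\<kappa> * D) * s + (1 - \<kappa> * d * s) * (\<kappa> * s) * w1 + (\<kappa> * d * s) * (1 - \<kappa> * s) * w2)
       + c22 * ((\<kappa> * D)^2 * s + (\<kappa> * s)^2 * w1 + (1 - \<kappa> * s)^2 * w2))"

lemma key_id:
  fixes f :: "real \<times> real \<Rightarrow> real"
    and f' :: "real \<times> real \<Rightarrow> ((real \<times> real) \<Rightarrow>\<^sub>L real)"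
    and f'' :: "real \<times> real \<Rightarrow> ((real \<times> real) \<Rightarrow>\<^sub>L ((real \<times> real) \<Rightarrow>\<^sub>L real))"
  assumes N: "N > 0" and m: "real m = d * real N" and d: "d > 0"
  shows "real N * (bernstein2 N m (\<lambda>y. f (Amat d \<kappa> N y)) x - f x) =
    PhiF \<kappa> d (fst x - snd x) (fst x * (1 - fst x)) (snd x * (1 - snd x) / d) (f' x (1,0)) (f' x (0,1))
      (f'' x (1,0) (1,0)) (f'' x (1,0) (0,1)) (f'' x (0,1) (1,0)) (f'' x (0,1) (0,1)) (1 / real N)
    + real N * B2 N m x (\<lambda>y. f (Amat d \<kappa> N y) - f x - f' x (Amat d \<kappa> N y - x) - f'' x (Amat d \<kappa> N y - x) (Amat d \<kappa> N y - x) / 2)"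
proof -
  define a1 where "a1 = f' x (1,0)"
  define a2 where "a2 = f' x (0,1)"
  define c11 where "c11 = f'' x (1,0) (1,0)"
  define c12 where "c12 = f'' x (1,0) (0,1)"
  define c21 where "c21 = f'' x (0,1) (1,0)"
  define c22 where "c22 = f'' x (0,1) (0,1)"
  define t where "t = \<kappa> / real N"
  define D where "D = fst x - snd x"
  define p0 where "p0 = - (t * d) * D"
  define p1 where "p1 = 1 - t * d"
  define p2 where "p2 = t * d"
  define q0 where "q0 = t * D"
  define q1 where "q1 = t"
  define q2 where "q2 = 1 - t"
  define E1 where "E1 = (\<lambda>y::real\<times>real. p0 + p1 * (fst y - fst x) + p2 * (snd y - snd x))"
  define E2 where "E2 = (\<lambda>y::real\<times>real. q0 + q1 * (fst y - fst x) + q2 * (snd y - snd x))"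
  define Rn where "Rn = (\<lambda>y. f (Amat d \<kappa> N y) - f x - f' x (Amat d \<kappa> N y - x) - f'' x (Amat d \<kappa> N y - x) (Amat d \<kappa> N y - x) / 2)"
  have m0: "m > 0" using m N d by (metis of_nat_0_less_iff zero_less_mult_iff)
  have Ae: "Amat d \<kappa> N y - x = (E1 y, E2 y)" for y
    unfolding E1_def E2_def p0_def p1_def p2_def q0_def q1_def q2_def D_def t_def by (rule Aeq)
  have fy: "f (Amat d \<kappa> N y) = f x + (a1 * E1 y + a2 * E2 y + 1/2 * (c11 * (E1 y * E1 y) + (c12 + c21) * (E1 y * E2 y) + c22 * (E2 y * E2 y))) + Rn y" for y
    unfolding Rn_def Ae lin1[of "f' x" "E1 y" "E2 y"] lin2[of "f'' x" "E1 y" "E2 y" "E1 y" "E2 y"] a1_def a2_def c11_def c12_def c21_def c22_def by (simp add: algebra_simps)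
  have BE1: "B2 N m x E1 = p0" unfolding E1_def by (rule B2_lin[OF N m0])
  have BE2: "B2 N m x E2 = q0" unfolding E2_def by (rule B2_lin[OF N m0])
  have BE11: "B2 N m x (\<lambda>y. E1 y * E1 y) = p0 * p0 + p1 * p1 * (fst x * (1 - fst x) / real N) + p2 * p2 * (snd x * (1 - snd x) / real m)"
    unfolding E1_def by (rule B2_bilin[OF N m0])
  have BE12: "B2 N m x (\<lambda>y. E1 y * E2 y) = p0 * q0 + p1 * q1 * (fst x * (1 - fst x) / real N) + p2 * q2 * (snd x * (1 - snd x) / real m)"
    unfolding E1_def E2_def by (rule B2_bilin[OF N m0])
  have BE22: "B2 N m x (\<lambda>y. E2 y * E2 y) = q0 * q0 + q1 * q1 * (fst x * (1 - fst x) / real N) + q2 * q2 * (snd x * (1 - snd x) / real m)"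
    unfolding E2_def by (rule B2_bilin[OF N m0])
  have "bernstein2 N m (\<lambda>y. f (Amat d \<kappa> N y)) x = B2 N m x (\<lambda>y. f x + (a1 * E1 y + a2 * E2 y + 1/2 * (c11 * (E1 y * E1 y) + (c12 + c21) * (E1 y * E2 y) + c22 * (E2 y * E2 y))) + Rn y)"
    unfolding bernstein2_B2 fy ..
  also have "\<dots> = f x + (a1 * p0 + a2 * q0 + 1/2 * (c11 * B2 N m x (\<lambda>y. E1 y * E1 y) + (c12 + c21) * B2 N m x (\<lambda>y. E1 y * E2 y) + c22 * B2 N m x (\<lambda>y. E2 y * E2 y))) + B2 N m x Rn"
    by (simp only: B2_add B2_cmult B2_const BE1 BE2)
  finally have eq: "bernstein2 N m (\<lambda>y. f (Amat d \<kappa> N y)) x = \<dots>" .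
  have "real N * (bernstein2 N m (\<lambda>y. f (Amat d \<kappa> N y)) x - f x) = real N * (a1 * p0 + a2 * q0 + 1/2 * (c11 * (p0 * p0 + p1 * p1 * (fst x * (1 - fst x) / real N) + p2 * p2 * (snd x * (1 - snd x) / real m)) + (c12 + c21) * (p0 * q0 + p1 * q1 * (fst x * (1 - fst x) / real N) + p2 * q2 * (snd x * (1 - snd x) / real m)) + c22 * (q0 * q0 + q1 * q1 * (fst x * (1 - fst x) / real N) + q2 * q2 * (snd x * (1 - snd x) / real m)))) + real N * B2 N m x Rn"
    unfolding eq BE11 BE12 BE22 by (simp add: add.assoc distrib_left)
  also have "real N * (a1 * p0 + a2 * q0 + 1/2 * (c11 * (p0 * p0 + p1 * p1 * (fst x * (1 - fst x) / real N) + p2 * p2 * (snd x * (1 - snd x) / real m)) + (c12 + c21) * (p0 * q0 + p1 * q1 * (fst x * (1 - fst x) / real N) + p2 * q2 * (snd x * (1 - snd x) / real m)) + c22 * (q0 * q0 + q1 * q1 * (fst x * (1 - fst x) / real N) + q2 * q2 * (snd x * (1 - snd x) / real m))))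
     = PhiF \<kappa> d D (fst x * (1 - fst x)) (snd x * (1 - snd x) / d) a1 a2 c11 c12 c21 c22 (1 / real N)"
    unfolding PhiF_def m p0_def p1_def p2_def q0_def q1_def q2_def t_def using N d
    by (simp add: field_simps power2_eq_square)
  finally show ?thesis unfolding Rn_def a1_def a2_def c11_def c12_def c21_def c22_def D_def .
qed

theorem lemma4:
  fixes d \<kappa> :: real
    and f :: "real \<times> real \<Rightarrow> real"
    and f' :: "real \<times> real \<Rightarrow> ((real \<times> real) \<Rightarrow>\<^sub>L real)"
    and f'' :: "real \<times> real \<Rightarrow> ((real \<times> real) \<Rightarrow>\<^sub>L ((real \<times> real) \<Rightarrow>\<^sub>L real))"
    and x :: "real \<times> real"
  assumes d: "0 < d" "d \<le> 1"
    and \<kappa>: "0 < \<kappa>"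
    and C2: "C2_on unit_square f f' f''"
    and f00: "f (0, 0) = 0" and f11: "f (1, 1) = 0"
    and x: "x \<in> unit_square"
  shows "((\<lambda>N. real N * (bernstein2 N (nat \<lfloor>d * real N\<rfloor>) (\<lambda>y. f (Amat d \<kappa> N y)) x - f x))
           \<longlongrightarrow> L_gen d \<kappa> f' f'' x)
         (inf sequentially (principal {N. d * real N \<in> \<nat>}))"
proof -
  have compS: "compact unit_square" unfolding unit_square_def by (intro compact_Times compact_Icc)
  have d1: "\<And>w. w \<in> unit_square \<Longrightarrow> (f has_derivative blinfun_apply (f' w)) (at w within unit_square)"
    using C2 unfolding C2_on_def by blast
  have d2: "\<And>w. w \<in> unit_square \<Longrightarrow> (f' has_derivative blinfun_apply (f'' w)) (at w within unit_square)"
    using C2 unfolding C2_on_def by blast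
  have contf: "continuous_on unit_square f''" using C2 unfolding C2_on_def by blast
  have x01: "0 \<le> fst x" "fst x \<le> 1" "0 \<le> snd x" "snd x \<le> 1" using x by (auto simp: unit_square_def)
  define Phi where "Phi = PhiF \<kappa> d (fst x - snd x) (fst x * (1 - fst x)) (snd x * (1 - snd x) / d) (f' x (1,0)) (f' x (0,1))
      (f'' x (1,0) (1,0)) (f'' x (1,0) (0,1)) (f'' x (0,1) (1,0)) (f'' x (0,1) (0,1))"
  define Rn where "Rn = (\<lambda>N y. f (Amat d \<kappa> N y) - f x - f' x (Amat d \<kappa> N y - x) - f'' x (Amat d \<kappa> N y - x) (Amat d \<kappa> N y - x) / 2)"
  define Fl where "Fl = inf sequentially (principal {N. d * real N \<in> \<nat>})"
  define mm where "mm = (\<lambda>N::nat. nat \<lfloor>d * real N\<rfloor>)"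
  have evFl: "eventually P Fl" if "eventually P sequentially" for P
    using that unfolding Fl_def eventually_inf_principal by (auto elim: eventually_mono)
  have evm: "eventually (\<lambda>N. real (mm N) = d * real N) Fl"
    unfolding Fl_def eventually_inf_principal mm_def
    by (intro always_eventually allI impI) (auto elim!: Nats_cases)
  have evN: "eventually (\<lambda>N. N > 0) Fl" by (rule evFl) (simp add: eventually_gt_at_top)
  have Phi0: "Phi 0 = L_gen d \<kappa> f' f'' x"
    unfolding Phi_def PhiF_def L_gen_def Mmat_def lin1[of "f' x" "d * fst x - d * snd x" "- fst x + snd x"]
    using d by (simp add: field_simps)
  have lim1: "((\<lambda>N. Phi (1 / real N)) \<longlongrightarrow> L_gen d \<kappa> f' f'' x) Fl"
  proof -
    have "isCont Phi 0" unfolding Phi_def PhiF_def by (intro continuous_intros)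
    then have "((\<lambda>N. Phi (1 / real N)) \<longlongrightarrow> Phi 0) sequentially"
      by (rule isCont_tendsto_compose) (rule lim_1_over_n)
    then show ?thesis unfolding Phi0 Fl_def by (rule tendsto_mono[OF inf_le1])
  qed
  have lim2: "((\<lambda>N. real N * B2 N (mm N) x (Rn N)) \<longlongrightarrow> 0) Fl"
  proof (rule tendstoI)
    fix e :: real assume e: "0 < e"
    define C1 where "C1 = 2 + 2/d + 4*\<kappa>^2"
    have C1: "0 < C1" using d unfolding C1_def by (simp add: add_pos_nonneg)
    define eps where "eps = e / (2 * C1)"
    have eps: "0 < eps" using e C1 by (simp add: eps_def)
    obtain \<delta> where \<delta>: "\<delta> > 0" and h\<delta>': "\<forall>w\<in>unit_square. dist w x < \<delta> \<longrightarrow> dist (f'' w) (f'' x) < eps"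
      using contf x eps unfolding continuous_on_iff by blast
    have h\<delta>: "\<And>w. w \<in> unit_square \<Longrightarrow> norm (w - x) < \<delta> \<Longrightarrow> norm (f'' w - f'' x) \<le> eps"
      using h\<delta>' by (auto simp: dist_norm intro: less_imp_le)
    have "compact ((\<lambda>w. f'' w - f'' x) ` unit_square)"
      using compS contf by (intro compact_continuous_image continuous_intros) auto
    then obtain K where K: "K > 0" and hK': "\<forall>z\<in>(\<lambda>w. f'' w - f'' x) ` unit_square. norm z \<le> K"
      using compact_imp_bounded bounded_pos by metis
    have hK: "\<And>w. w \<in> unit_square \<Longrightarrow> norm (f'' w - f'' x) \<le> K" using hK' by auto
    define K' where "K' = K / \<delta>^2"
    have K'0: "0 \<le> K'" using K by (simp add: K'_def)
    define C2 where "C2 = 12 + 12/d^2 + 48*\<kappa>^4"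
    obtain N1 :: nat where N1: "max 1 \<kappa> \<le> real N1" using real_arch_simple by blast
    obtain N2 :: nat where N2: "2 * K' * C2 / e < real N2" using reals_Archimedean2 by blast
    have evS: "eventually (\<lambda>N. max 1 \<kappa> \<le> real N \<and> 2 * K' * C2 / e < real N) sequentially"
      unfolding eventually_sequentially
    proof (intro exI[of _ "max N1 N2"] allI impI conjI)
      fix N assume "max N1 N2 \<le> N"
      then have "real N1 \<le> real N" "real N2 \<le> real N" by auto
      then show "max 1 \<kappa> \<le> real N" "2 * K' * C2 / e < real N" using N1 N2 by linarith+
    qed
    show "eventually (\<lambda>N. dist (real N * B2 N (mm N) x (Rn N)) 0 < e) Fl"
      using evFl[OF evS] evm
    proof eventually_elim
      case (elim N)
      then have N1: "real N \<ge> 1" "real N \<ge> \<kappa>" and NK: "2 * K' * C2 / e < real N"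
        and mN: "real (mm N) = d * real N" by auto
      have Npos: "N > 0" using N1 by simp
      have t: "0 \<le> \<kappa> / real N" "\<kappa> / real N \<le> 1" using N1 \<kappa> by (auto simp: field_simps)
      have mpos: "real (mm N) > 0" using mN d Npos by simp
      then have m0: "mm N > 0" by simp
      define t where "t = \<kappa> / real N"
      define W where "W = (\<lambda>y. eps * (2 * (fst y - fst x)^2 + 2 * (snd y - snd x)^2 + 4 * t^2)
          + K' * (12 * (fst y - fst x)^4 + 12 * (snd y - snd x)^4 + 48 * t^4))"
      have pw: "\<bar>Rn N y\<bar> \<le> W y" if y: "y \<in> unit_square" for y
        unfolding Rn_def W_def t_def K'_def
        by (rule rem_bound[OF d1 d2 x y d t]) (use eps \<delta> K h\<delta> hK in auto)
      have up: "B2 N (mm N) x (Rn N) \<le> B2 N (mm N) x W"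
        using pw by (intro B2_mono[OF x]) (auto simp: abs_le_iff)
      have lo: "B2 N (mm N) x (\<lambda>y. (-1) * W y) \<le> B2 N (mm N) x (Rn N)"
      proof (rule B2_mono[OF x])
        fix y assume "y \<in> unit_square"
        then show "(-1) * W y \<le> Rn N y" using pw[of y] by linarith
      qed
      then have lo': "- B2 N (mm N) x W \<le> B2 N (mm N) x (Rn N)" unfolding B2_cmult by simp
      have absB: "\<bar>B2 N (mm N) x (Rn N)\<bar> \<le> B2 N (mm N) x W" using up lo' by linarith
      define A1 where "A1 = B2 N (mm N) x (\<lambda>y. (fst y - fst x)^2)"
      define A2 where "A2 = B2 N (mm N) x (\<lambda>y. (snd y - snd x)^2)"
      define Q1 where "Q1 = B2 N (mm N) x (\<lambda>y. (fst y - fst x)^4)"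
      define Q2 where "Q2 = B2 N (mm N) x (\<lambda>y. (snd y - snd x)^4)"
      have A1: "A1 = fst x * (1 - fst x) / real N"
        unfolding A1_def using B2_fst[of N "mm N" x "\<lambda>s. (s - fst x)^2"] B1_mom2[OF Npos] by simp
      have A2: "A2 = snd x * (1 - snd x) / real (mm N)"
        unfolding A2_def using B2_snd[of N "mm N" x "\<lambda>s. (s - snd x)^2"] B1_mom2[OF m0] by simp
      have Q1: "Q1 \<le> 1 / (real N)^2"
        unfolding Q1_def using B2_fst[of N "mm N" x "\<lambda>s. (s - fst x)^4"] B1_mom4[OF Npos x01(1,2)] by simp
      have Q2: "Q2 \<le> 1 / (real (mm N))^2"
        unfolding Q2_def using B2_snd[of N "mm N" x "\<lambda>s. (s - snd x)^4"] B1_mom4[OF m0 x01(3,4)] by simp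
      have BW: "B2 N (mm N) x W = eps * (2 * A1 + 2 * A2 + 4 * t^2) + K' * (12 * Q1 + 12 * Q2 + 48 * t^4)"
        unfolding W_def A1_def A2_def Q1_def Q2_def by (simp only: B2_add B2_cmult B2_const)
      have p1: "0 \<le> fst x * (1 - fst x)" "fst x * (1 - fst x) \<le> 1" using x01 by (auto intro: mult_le_one)
      have p2: "0 \<le> snd x * (1 - snd x)" "snd x * (1 - snd x) \<le> 1" using x01 by (auto intro: mult_le_one)
      have f1: "real N * A1 \<le> 1" unfolding A1 using Npos p1 by simp
      have "real N * A2 = snd x * (1 - snd x) / d" unfolding A2 mN using Npos d by (simp add: field_simps)
      also have "\<dots> \<le> 1 / d" using p2 d by (intro divide_right_mono) auto
      finally have f2: "real N * A2 \<le> 1 / d" .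
      have f3: "real N * t^2 \<le> \<kappa>^2" unfolding t_def using N1 \<kappa> by (simp add: field_simps power2_eq_square)
      have g1: "real N * Q1 \<le> 1 / real N"
      proof -
        have "real N * Q1 \<le> real N * (1 / (real N)^2)" using Q1 Npos by (intro mult_left_mono) auto
        then show ?thesis using Npos by (simp add: power2_eq_square)
      qed
      have g2: "real N * Q2 \<le> 1 / d^2 / real N"
      proof -
        have "real N * Q2 \<le> real N * (1 / (real (mm N))^2)" using Q2 Npos by (intro mult_left_mono) auto
        then show ?thesis unfolding mN using d Npos by (simp add: power2_eq_square field_simps)
      qed
      have g3: "real N * t^4 \<le> \<kappa>^4 / real N"
      proof -
        have "real N * t^4 = \<kappa>^4 / real N / (real N)^2" unfolding t_def using Npos by (simp add: field_simps power4_eq_xxxx power2_eq_square)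
        also have "\<dots> \<le> \<kappa>^4 / real N" using N1 \<kappa> by (simp add: divide_le_eq one_le_power field_simps)
        finally show ?thesis .
      qed
      have "real N * B2 N (mm N) x W = eps * (2 * (real N * A1) + 2 * (real N * A2) + 4 * (real N * t^2))
           + K' * (12 * (real N * Q1) + 12 * (real N * Q2) + 48 * (real N * t^4))"
        unfolding BW by (simp add: algebra_simps)
      also have "\<dots> \<le> eps * (2 * 1 + 2 * (1/d) + 4 * \<kappa>^2) + K' * (12 * (1 / real N) + 12 * (1 / d^2 / real N) + 48 * (\<kappa>^4 / real N))"
        using f1 f2 f3 g1 g2 g3 eps K'0 by (intro add_mono mult_left_mono) auto
      also have "\<dots> = e / 2 + K' * C2 / real N"
      proof -
        have "2 * 1 + 2 * (1/d) + 4 * \<kappa>^2 = C1" unfolding C1_def by simp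
        then have a: "eps * (2 * 1 + 2 * (1/d) + 4 * \<kappa>^2) = e / 2" unfolding eps_def using C1 by simp
        have b: "K' * (12 * (1 / real N) + 12 * (1 / d^2 / real N) + 48 * (\<kappa>^4 / real N)) = K' * C2 / real N"
          unfolding C2_def using Npos d by (simp add: field_simps)
        show ?thesis unfolding a b ..
      qed
      also have "\<dots> < e / 2 + e / 2"
      proof -
        have "2 * K' * C2 < e * real N" using NK e by (simp add: field_simps)
        then have "K' * C2 / real N < e / 2" using Npos by (simp add: field_simps)
        then show ?thesis by linarith
      qed
      finally have "real N * B2 N (mm N) x W < e" by simp
      moreover have "\<bar>real N * B2 N (mm N) x (Rn N)\<bar> \<le> real N * B2 N (mm N) x W"
        using absB by (simp add: abs_mult mult_left_mono)
      ultimately show ?case by simp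
    qed
  qed
  have "((\<lambda>N. Phi (1 / real N) + real N * B2 N (mm N) x (Rn N)) \<longlongrightarrow> L_gen d \<kappa> f' f'' x + 0) Fl"
    by (rule tendsto_add[OF lim1 lim2])
  moreover have "eventually (\<lambda>N. Phi (1 / real N) + real N * B2 N (mm N) x (Rn N)
      = real N * (bernstein2 N (nat \<lfloor>d * real N\<rfloor>) (\<lambda>y. f (Amat d \<kappa> N y)) x - f x)) Fl"
    using evm evN
  proof eventually_elim
    case (elim N)
    show ?case using key_id[OF elim(2) elim(1) d(1), of f \<kappa> x f' f''] unfolding Phi_def Rn_def mm_def by simp
  qed
  ultimately show ?thesis unfolding Fl_def by (auto intro: Lim_transform_eventually)
qed

end
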